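(* Let $X=\{x_1,\ldots,x_n\}$ be a set of quantum variables, $q=p_{22}$, and let $\Omega:\mathbf{k}\langle X\rangle\to Sh(W)$ be the algebra homomorphism with $\Omega(x_i)=(x_i)$. Let $m\ge 0$. If $[k]_q\neq0$ and $p_{12}p_{21}\neq q^{1-k}$ for all $1\le k\le m$, then, with $$\{x_1x_2^m\}=\frac{[x_1x_2^m]}{[m]_q!\prod_{s=0}^{m-1}(1-p_{12}p_{21}q^s)},\qquad \{x_2^mx_1\}=\frac{[x_2^mx_1]}{[m]_q!\prod_{s=0}^{m-1}(1-p_{12}p_{21}q^s)},$$ one has $$\Omega(\{x_1x_2^m\})=p_{21}^{-m}q^{\frac{m(1-m)}{2}}(x_2^mx_1),\qquad \Omega(\{x_2^mx_1\})=p_{12}^{-m}q^{\frac{m(1-m)}{2}}(x_1x_2^m).$$ Otherwise $\Omega([x_1x_2^m])=\Omega([x_2^mx_1])=0$.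
   Context: Quantum variables: each $x_i$ is associated with an element $g_i$ of an abelian group $G$ and a character $\chi^i:G\to\mathbf{k}^*$; $p_{ij}=\chi^i(g_j)$, and for words $u,v$, $p(u,v)$ is the bimultiplicative extension. Skew bracket in $\mathbf{k}\langle X\rangle$ for homogeneous $u,v$: $[u,v]=uv-p(u,v)vu$; $[x_1x_2^m]=[\ldots[[x_1,x_2],x_2],\ldots,x_2]$ and $[x_2^mx_1]=[x_2,[x_2,\ldots,[x_2,x_1]\ldots]]$ ($m$ copies of $x_2$). $Sh(W)$ is the tensor space of $W=\mathrm{span}(X)$ with basis the comonomials $(z_1\cdots z_m)$, $z_i\in X$, and the quantum shuffle product: $(u)(v)$ is the sum over all shuffles of the letters of $u$ and $v$ of the resulting comonomial weighted by the product of $p(b,a)^{-1}$ over all pairs with $a$ a letter of $u$, $b$ a letter of $v$, and $b$ placed before $a$. In particular $(w)(x_i)=\sum_{uv=w}p(x_i,v)^{-1}(ux_iv)$ and $(x_i)(w)=\sum_{uv=w}p(u,x_i)^{-1}(ux_iv)$. $[m]_q=1+q+\cdots+q^{m-1}$, $[m]_q!=\prod_{k=1}^m[k]_q$. *)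

theory Defs
  imports Main
begin

text \<open>Letters x_i are represented by their indices i :: nat; words by nat lists.
  Elements of k<X> and of Sh(W) are both represented as coefficient functions
  on words (nat list => 'k); all elements used below have finite support.
  The quantum-variable data is the matrix p i j = chi^i(g_j).\<close>

type_synonym 'k lin = "nat list \<Rightarrow> 'k"

definition comono :: "nat list \<Rightarrow> 'k::field lin" where
  "comono u = (\<lambda>w. if w = u then 1 else 0)"

definition gen :: "nat \<Rightarrow> 'k::field lin" where
  "gen i = comono [i]"

definition lsmult :: "'k::field \<Rightarrow> 'k lin \<Rightarrow> 'k lin" where
  "lsmult c f = (\<lambda>w. c * f w)"

definition lminus :: "'k::field lin \<Rightarrow> 'k lin \<Rightarrow> 'k lin" where
  "lminus f g = (\<lambda>w. f w - g w)"

definition fmult :: "'k::field lin \<Rightarrow> 'k lin \<Rightarrow> 'k lin" where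
  "fmult f g = (\<lambda>w. \<Sum>i\<in>{0..length w}. f (take i w) * g (drop i w))"

definition pw :: "(nat \<Rightarrow> nat \<Rightarrow> 'k::field) \<Rightarrow> nat list \<Rightarrow> nat list \<Rightarrow> 'k" where
  "pw p u v = (\<Prod>a\<leftarrow>u. \<Prod>b\<leftarrow>v. p a b)"

text \<open>skew bracket [f,g] = fg - p(u,v) gf for f homogeneous of degree (the letters of) u
  and g homogeneous of degree v\<close>
definition skew_br :: "(nat \<Rightarrow> nat \<Rightarrow> 'k::field) \<Rightarrow> nat list \<Rightarrow> nat list \<Rightarrow> 'k lin \<Rightarrow> 'k lin \<Rightarrow> 'k lin" where
  "skew_br p u v f g = lminus (fmult f g) (lsmult (pw p u v) (fmult g f))"

text \<open>[x_1 x_2^m] = [...[[x_1,x_2],x_2],...,x_2]\<close>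
fun br_left :: "(nat \<Rightarrow> nat \<Rightarrow> 'k::field) \<Rightarrow> nat \<Rightarrow> 'k lin" where
  "br_left p 0 = gen 1"
| "br_left p (Suc k) = skew_br p (1 # replicate k 2) [2] (br_left p k) (gen 2)"

text \<open>[x_2^m x_1] = [x_2,[x_2,...,[x_2,x_1]...]]\<close>
fun br_right :: "(nat \<Rightarrow> nat \<Rightarrow> 'k::field) \<Rightarrow> nat \<Rightarrow> 'k lin" where
  "br_right p 0 = gen 1"
| "br_right p (Suc k) = skew_br p [2] (replicate k 2 @ [1]) (gen 2) (br_right p k)"

text \<open>quantum shuffle product: w is split into the subword on positions S
  (letters of the first factor) and on the complement (second factor); each pair with
  a letter b of the second factor placed before a letter a of the first factor
  contributes p(b,a)^{-1}.\<close>
definition shuffle :: "(nat \<Rightarrow> nat \<Rightarrow> 'k::field) \<Rightarrow> 'k lin \<Rightarrow> 'k lin \<Rightarrow> 'k lin" where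
  "shuffle p f g = (\<lambda>w. \<Sum>S\<in>Pow {0..<length w}.
      f (nths w S) * g (nths w ({0..<length w} - S)) *
      (\<Prod>(i, j)\<in>{(i, j). i \<in> S \<and> j \<in> {0..<length w} - S \<and> j < i}.
          inverse (p (w ! j) (w ! i))))"

fun Omega_word :: "(nat \<Rightarrow> nat \<Rightarrow> 'k::field) \<Rightarrow> nat list \<Rightarrow> 'k lin" where
  "Omega_word p [] = comono []"
| "Omega_word p (i # w) = shuffle p (comono [i]) (Omega_word p w)"

text \<open>linear extension (for finitely supported f this is the algebra homomorphism
  k<X> -> Sh(W) with x_i |-> (x_i))\<close>
definition Omega :: "(nat \<Rightarrow> nat \<Rightarrow> 'k::field) \<Rightarrow> 'k lin \<Rightarrow> 'k lin" where
  "Omega p f = (\<lambda>w'. \<Sum>w\<in>{w. f w \<noteq> 0}. f w * Omega_word p w w')"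

definition qint :: "'k::field \<Rightarrow> nat \<Rightarrow> 'k" where
  "qint q k = (\<Sum>i<k. q ^ i)"

definition qfact :: "'k::field \<Rightarrow> nat \<Rightarrow> 'k" where
  "qfact q m = (\<Prod>k=1..m. qint q k)"

end

theory Submission
  imports Defs
begin

definition del :: "nat \<Rightarrow> 'a list \<Rightarrow> 'a list" where
  "del k v = take k v @ drop (Suc k) v"

definition Lop :: "(nat \<Rightarrow> nat \<Rightarrow> 'k::field) \<Rightarrow> nat \<Rightarrow> 'k lin \<Rightarrow> 'k lin" where
  "Lop p i F = (\<lambda>v. \<Sum>k<length v. if v!k = i then inverse (\<Prod>a<k. p (v!a) i) * F (del k v) else 0)"

definition Rop :: "(nat \<Rightarrow> nat \<Rightarrow> 'k::field) \<Rightarrow> nat \<Rightarrow> 'k lin \<Rightarrow> 'k lin" where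
  "Rop p j F = (\<lambda>v. \<Sum>l<length v. if v!l = j then inverse (\<Prod>a\<in>{Suc l..<length v}. p j (v!a)) * F (del l v) else 0)"

lemma nths_cong_idx:
  "(\<And>a. a < length w \<Longrightarrow> (a \<in> A \<longleftrightarrow> a \<in> B)) \<Longrightarrow> nths w A = nths w B"
proof (induction w arbitrary: A B)
  case Nil then show ?case by simp
next
  case (Cons x w)
  have "nths w {j. Suc j \<in> A} = nths w {j. Suc j \<in> B}"
    by (rule Cons.IH) (use Cons.prems in auto)
  moreover have "0 \<in> A \<longleftrightarrow> 0 \<in> B" using Cons.prems by auto
  ultimately show ?case by (simp add: nths_Cons)
qed

lemma nths_single: "k < length w \<Longrightarrow> nths w {k} = [w!k]"
proof (induction w arbitrary: k)
  case Nil then show ?case by simp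
next
  case (Cons x w)
  then show ?case
  proof (cases k)
    case 0 then show ?thesis by (simp add: nths_Cons)
  next
    case (Suc k')
    then have "{j. Suc j \<in> {k}} = {k'}" by auto
    with Suc Cons show ?thesis by (simp add: nths_Cons)
  qed
qed

lemma nths_compl1: "nths w (- {k}) = del k w"
proof (induction w arbitrary: k)
  case Nil then show ?case by (simp add: del_def)
next
  case (Cons x w)
  then show ?case
  proof (cases k)
    case 0
    have "{j. Suc j \<in> - {0::nat}} = UNIV" by auto
    with 0 show ?thesis by (simp add: nths_Cons del_def nths_all)
  next
    case (Suc k')
    then have "{j. Suc j \<in> - {k}} = - {k'}" by auto
    with Suc Cons show ?thesis by (simp add: nths_Cons del_def)
  qed
qed

lemma nths_compl: "nths w ({0..<length w} - {k}) = del k w"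
proof -
  have "nths w ({0..<length w} - {k}) = nths w (- {k})"
    by (rule nths_cong_idx) auto
  then show ?thesis by (simp add: nths_compl1)
qed

lemma length_del: "k < length v \<Longrightarrow> length (del k v) = length v - 1"
  by (simp add: del_def)

lemma nth_del: "k < length v \<Longrightarrow> b < length v - 1 \<Longrightarrow>
   del k v ! b = (if b < k then v ! b else v ! Suc b)"
  by (auto simp add: del_def nth_append min_def)

lemma shuffle_left: "shuffle p (comono [i]) F = Lop p i F"
proof
  fix w :: "nat list"
  define n where "n = length w"
  define T where "T S = comono [i] (nths w S) * F (nths w ({0..<length w} - S)) *
      (\<Prod>(a, b)\<in>{(a, b). a \<in> S \<and> b \<in> {0..<length w} - S \<and> b < a}.
          inverse (p (w ! b) (w ! a)))" for S
  have "shuffle p (comono [i]) F w = (\<Sum>S\<in>Pow {0..<n}. T S)"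
    by (simp add: shuffle_def T_def n_def)
  also have "\<dots> = (\<Sum>S\<in>(\<lambda>k. {k}) ` {0..<n}. T S)"
  proof (rule sum.mono_neutral_right)
    show "finite (Pow {0..<n})" by simp
    show "(\<lambda>k. {k}) ` {0..<n} \<subseteq> Pow {0..<n}" by auto
    show "\<forall>S\<in>Pow {0..<n} - (\<lambda>k. {k}) ` {0..<n}. T S = 0"
    proof
      fix S assume S: "S \<in> Pow {0..<n} - (\<lambda>k. {k}) ` {0..<n}"
      have "nths w S \<noteq> [i]"
      proof
        assume "nths w S = [i]"
        then have "length (nths w S) = 1" by simp
        then have "card {a. a < length w \<and> a \<in> S} = 1" by (simp add: length_nths)
        moreover have "{a. a < length w \<and> a \<in> S} = S" using S by (auto simp: n_def)
        ultimately have "card S = 1" by simp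
        then obtain k where "S = {k}" by (auto simp: card_Suc_eq)
        with S show False by auto
      qed
      then show "T S = 0" by (simp add: T_def comono_def)
    qed
  qed
  also have "\<dots> = (\<Sum>k<n. T {k})"
    by (subst sum.reindex) (auto simp: inj_on_def atLeast0LessThan)
  also have "\<dots> = Lop p i F w"
    unfolding Lop_def n_def
  proof (rule sum.cong)
    fix k assume "k \<in> {..<length w}"
    then have k: "k < length w" by simp
    have pairs: "{(a, b). a \<in> {k} \<and> b \<in> {0..<length w} - {k} \<and> b < a} = (\<lambda>b. (k, b)) ` {..<k}"
      using k by auto
    have "(\<Prod>(a, b)\<in>{(a, b). a \<in> {k} \<and> b \<in> {0..<length w} - {k} \<and> b < a}.
          inverse (p (w ! b) (w ! a))) = (\<Prod>b<k. inverse (p (w ! b) (w ! k)))"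
      unfolding pairs by (subst prod.reindex) (auto simp: inj_on_def)
    also have "\<dots> = inverse (\<Prod>b<k. p (w ! b) (w ! k))"
      using prod_inversef[of "\<lambda>b. p (w ! b) (w ! k)" "{..<k}"] by (simp add: comp_def)
    finally have P: "(\<Prod>(a, b)\<in>{(a, b). a \<in> {k} \<and> b \<in> {0..<length w} - {k} \<and> b < a}.
          inverse (p (w ! b) (w ! a))) = inverse (\<Prod>b<k. p (w ! b) (w ! k))" .
    show "T {k} = (if w ! k = i then inverse (\<Prod>a<k. p (w ! a) i) * F (del k w) else 0)"
      unfolding T_def P using k by (simp add: nths_single nths_compl comono_def)
  qed simp
  finally show "shuffle p (comono [i]) F w = Lop p i F w" .
qed


definition psi :: "nat \<Rightarrow> nat \<Rightarrow> nat" where "psi k l = (if l < k then l else l - 1)"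
definition phi :: "nat \<Rightarrow> nat \<Rightarrow> nat" where "phi k a = (if a < k then a else Suc a)"

lemma bij_psi: "k < n \<Longrightarrow> bij_betw (psi k) ({..<n} - {k}) {..<n-1}"
  by (rule bij_betw_byWitness[where f'="phi k"]) (auto simp: psi_def phi_def)

lemma bij_phi_hi: "k < n \<Longrightarrow> l < n \<Longrightarrow> l \<noteq> k \<Longrightarrow>
  bij_betw (phi k) {Suc (psi k l)..<n-1} ({Suc l..<n} - {k})"
  by (rule bij_betw_byWitness[where f'="psi k"]) (auto simp: psi_def phi_def)

lemma bij_phi_lo: "k < n \<Longrightarrow> l < n \<Longrightarrow> l \<noteq> k \<Longrightarrow>
  bij_betw (phi k) {..<psi k l} ({..<l} - {k})"
  by (rule bij_betw_byWitness[where f'="psi k"]) (auto simp: psi_def phi_def)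

lemma nth_del_phi: "k < length v \<Longrightarrow> a < length v - 1 \<Longrightarrow> del k v ! a = v ! phi k a"
  by (simp add: nth_del phi_def)

lemma nth_del_psi: "k < length v \<Longrightarrow> l < length v \<Longrightarrow> l \<noteq> k \<Longrightarrow> del k v ! psi k l = v ! l"
  by (auto simp add: nth_del psi_def)

lemma del_del_comm: "k < length v \<Longrightarrow> l < length v \<Longrightarrow> l \<noteq> k \<Longrightarrow>
   del (psi k l) (del k v) = del (psi l k) (del l v)"
proof (rule nth_equalityI)
  assume k: "k < length v" and l: "l < length v" and kl: "l \<noteq> k"
  have pk: "psi k l < length (del k v)" and pl: "psi l k < length (del l v)"
    using k l kl by (auto simp: length_del psi_def)
  show "length (del (psi k l) (del k v)) = length (del (psi l k) (del l v))"
    using pk pl k l by (simp add: length_del)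
  fix a assume "a < length (del (psi k l) (del k v))"
  then have a: "a < length v - 2" using pk k by (simp add: length_del)
  show "del (psi k l) (del k v) ! a = del (psi l k) (del l v) ! a"
    using k l kl a pk pl by (auto simp add: nth_del length_del psi_def)
qed

lemma inner_reindex:
  fixes G :: "nat \<Rightarrow> 'k::field"
  assumes "k < length v"
  shows "(\<Sum>l'<length (del k v). G l') = (\<Sum>l\<in>{..<length v} - {k}. G (psi k l))"
  using sum.reindex_bij_betw[OF bij_psi[OF assms], of G] assms by (simp add: length_del)

lemma LR_comm: "Lop p i (Rop p j F) = Rop p j (Lop p i F)"
proof
  fix v :: "nat list"
  define n where "n = length v"
  define E where "E k l = del (psi k l) (del k v)" for k l
  define Tm where "Tm k l = (if v!k = i \<and> v!l = j then inverse (\<Prod>a<k. p (v!a) i) *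
      inverse (\<Prod>a\<in>{Suc l..<n} - {k}. p j (v!a)) * F (E k l) else 0)" for k l
  define Tm2 where "Tm2 k l = (if v!k = i \<and> v!l = j then inverse (\<Prod>a\<in>{..<k} - {l}. p (v!a) i) *
      inverse (\<Prod>a\<in>{Suc l..<n}. p j (v!a)) * F (E l k) else 0)" for k l
  have eqT: "Tm k l = Tm2 k l" if "k < n" "l < n" "k \<noteq> l" for k l
  proof (cases "v!k = i \<and> v!l = j")
    case False then show ?thesis by (simp only: Tm_def Tm2_def if_not_P[OF False] if_False)
  next
    case True
    have EE: "E k l = E l k" unfolding E_def using that del_del_comm[of k v l] by (simp add: n_def)
    have W: "inverse (\<Prod>a<k. p (v!a) i) * inverse (\<Prod>a\<in>{Suc l..<n} - {k}. p j (v!a)) =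
             inverse (\<Prod>a\<in>{..<k} - {l}. p (v!a) i) * inverse (\<Prod>a\<in>{Suc l..<n}. p j (v!a))"
    proof (cases "l < k")
      case True
      have 1: "(\<Prod>a<k. p (v!a) i) = p j i * (\<Prod>a\<in>{..<k} - {l}. p (v!a) i)"
        using prod.remove[of "{..<k}" l "\<lambda>a. p (v!a) i"] True \<open>v!k = i \<and> v!l = j\<close> by simp
      have 2: "(\<Prod>a\<in>{Suc l..<n}. p j (v!a)) = p j i * (\<Prod>a\<in>{Suc l..<n} - {k}. p j (v!a))"
        using prod.remove[of "{Suc l..<n}" k "\<lambda>a. p j (v!a)"] True that \<open>v!k = i \<and> v!l = j\<close> by simp
      show ?thesis unfolding 1 2 by (simp add: inverse_mult_distrib mult_ac)
    next
      case False
      then have "{..<k} - {l} = {..<k}" "{Suc l..<n} - {k} = {Suc l..<n}" using that by auto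
      then show ?thesis by simp
    qed
    show ?thesis unfolding Tm_def Tm2_def EE using W True by simp
  qed
  have L: "Lop p i (Rop p j F) v = (\<Sum>k<n. \<Sum>l\<in>{..<n} - {k}. Tm k l)"
    unfolding Lop_def n_def
  proof (rule sum.cong)
    fix k assume "k \<in> {..<length v}"
    then have k: "k < length v" by simp
    show "(if v ! k = i then inverse (\<Prod>a<k. p (v ! a) i) * Rop p j F (del k v) else 0) =
          (\<Sum>l\<in>{..<length v} - {k}. Tm k l)"
    proof (cases "v!k = i")
      case False then show ?thesis by (simp add: Tm_def)
    next
      case True
      have "Rop p j F (del k v) = (\<Sum>l\<in>{..<length v} - {k}.
          (if del k v ! psi k l = j then inverse (\<Prod>a\<in>{Suc (psi k l)..<length (del k v)}. p j (del k v ! a))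
             * F (del (psi k l) (del k v)) else 0))"
        unfolding Rop_def by (rule inner_reindex[OF k])
      also have "\<dots> = (\<Sum>l\<in>{..<length v} - {k}.
          (if v ! l = j then inverse (\<Prod>a\<in>{Suc l..<n} - {k}. p j (v ! a)) * F (E k l) else 0))"
      proof (rule sum.cong)
        fix l assume "l \<in> {..<length v} - {k}"
        then have l: "l < length v" "l \<noteq> k" by auto
        have "(\<Prod>a\<in>{Suc (psi k l)..<length (del k v)}. p j (del k v ! a)) =
              (\<Prod>a\<in>{Suc (psi k l)..<length v - 1}. p j (v ! phi k a))"
          using k by (intro prod.cong) (auto simp: length_del nth_del_phi)
        also have "\<dots> = (\<Prod>a\<in>{Suc l..<n} - {k}. p j (v ! a))"
          using prod.reindex_bij_betw[OF bij_phi_hi[OF k l(1) l(2)], of "\<lambda>a. p j (v ! a)"] by (simp add: n_def)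
        finally show "(if del k v ! psi k l = j then inverse (\<Prod>a\<in>{Suc (psi k l)..<length (del k v)}. p j (del k v ! a))
             * F (del (psi k l) (del k v)) else 0) =
          (if v ! l = j then inverse (\<Prod>a\<in>{Suc l..<n} - {k}. p j (v ! a)) * F (E k l) else 0)"
          using nth_del_psi[OF k l(1) l(2)] by (simp add: E_def)
      qed simp
      finally have X: "Rop p j F (del k v) = (\<Sum>l\<in>{..<length v} - {k}.
          (if v ! l = j then inverse (\<Prod>a\<in>{Suc l..<n} - {k}. p j (v ! a)) * F (E k l) else 0))" .
      show ?thesis unfolding X using True
        by (simp add: sum_distrib_left Tm_def) (rule sum.cong; simp add: mult.assoc)
    qed
  qed simp
  have R: "Rop p j (Lop p i F) v = (\<Sum>l<n. \<Sum>k\<in>{..<n} - {l}. Tm2 k l)"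
    unfolding Rop_def n_def
  proof (rule sum.cong)
    fix l assume "l \<in> {..<length v}"
    then have l: "l < length v" by simp
    show "(if v ! l = j then inverse (\<Prod>a\<in>{Suc l..<length v}. p j (v ! a)) * Lop p i F (del l v) else 0) =
          (\<Sum>k\<in>{..<length v} - {l}. Tm2 k l)"
    proof (cases "v!l = j")
      case False then show ?thesis by (simp add: Tm2_def)
    next
      case True
      have "Lop p i F (del l v) = (\<Sum>k\<in>{..<length v} - {l}.
          (if del l v ! psi l k = i then inverse (\<Prod>a<psi l k. p (del l v ! a) i)
             * F (del (psi l k) (del l v)) else 0))"
        unfolding Lop_def by (rule inner_reindex[OF l])
      also have "\<dots> = (\<Sum>k\<in>{..<length v} - {l}.
          (if v ! k = i then inverse (\<Prod>a\<in>{..<k} - {l}. p (v ! a) i) * F (E l k) else 0))"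
      proof (rule sum.cong)
        fix k assume "k \<in> {..<length v} - {l}"
        then have k: "k < length v" "k \<noteq> l" by auto
        have "(\<Prod>a<psi l k. p (del l v ! a) i) = (\<Prod>a<psi l k. p (v ! phi l a) i)"
          using l k by (intro prod.cong refl arg_cong[where f="\<lambda>x. p x i"] nth_del_phi) (auto simp: psi_def split: if_splits)
        also have "\<dots> = (\<Prod>a\<in>{..<k} - {l}. p (v ! a) i)"
          using prod.reindex_bij_betw[OF bij_phi_lo[OF l k(1) k(2)], of "\<lambda>a. p (v ! a) i"] by simp
        finally show "(if del l v ! psi l k = i then inverse (\<Prod>a<psi l k. p (del l v ! a) i)
             * F (del (psi l k) (del l v)) else 0) =
          (if v ! k = i then inverse (\<Prod>a\<in>{..<k} - {l}. p (v ! a) i) * F (E l k) else 0)"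
          using nth_del_psi[OF l k(1) k(2)] by (simp add: E_def)
      qed simp
      finally have X: "Lop p i F (del l v) = (\<Sum>k\<in>{..<length v} - {l}.
          (if v ! k = i then inverse (\<Prod>a\<in>{..<k} - {l}. p (v ! a) i) * F (E l k) else 0))" .
      show ?thesis unfolding X using True
        by (simp add: sum_distrib_left Tm2_def) (rule sum.cong; simp add: mult_ac n_def)
    qed
  qed simp
  have "(\<Sum>k<n. \<Sum>l\<in>{..<n} - {k}. Tm k l) = (\<Sum>k<n. \<Sum>l\<in>{y. y \<in> {..<n} \<and> k \<noteq> y}. Tm k l)"
    by (intro sum.cong) auto
  also have "\<dots> = (\<Sum>l<n. \<Sum>k\<in>{x. x \<in> {..<n} \<and> x \<noteq> l}. Tm k l)"
    by (rule sum.swap_restrict) auto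
  also have "\<dots> = (\<Sum>l<n. \<Sum>k\<in>{..<n} - {l}. Tm k l)"
    by (intro sum.cong) auto
  also have "\<dots> = (\<Sum>l<n. \<Sum>k\<in>{..<n} - {l}. Tm2 k l)"
    by (intro sum.cong refl) (auto simp: eqT)
  finally show "Lop p i (Rop p j F) v = Rop p j (Lop p i F) v" using L R by simp
qed


lemma Lop_nil: "Lop p j (comono []) = comono [j]"
proof
  fix v :: "nat list"
  show "Lop p j (comono []) v = comono [j] v"
  proof (cases "length v = 1")
    case True
    then obtain x where v: "v = [x]" by (cases v) auto
    show ?thesis by (simp add: Lop_def v comono_def del_def)
  next
    case False
    have "\<forall>k<length v. del k v \<noteq> []" using False by (auto simp: del_def)
    moreover have "v \<noteq> [j]" using False by auto
    ultimately show ?thesis by (auto simp add: Lop_def comono_def intro!: sum.neutral)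
  qed
qed

lemma Rop_nil: "Rop p j (comono []) = comono [j]"
proof
  fix v :: "nat list"
  show "Rop p j (comono []) v = comono [j] v"
  proof (cases "length v = 1")
    case True
    then obtain x where v: "v = [x]" by (cases v) auto
    show ?thesis by (simp add: Rop_def v comono_def del_def)
  next
    case False
    have "\<forall>k<length v. del k v \<noteq> []" using False by (auto simp: del_def)
    moreover have "v \<noteq> [j]" using False by auto
    ultimately show ?thesis by (auto simp add: Rop_def comono_def intro!: sum.neutral)
  qed
qed

lemma Omega_word_snoc: "Omega_word p (w @ [j]) = Rop p j (Omega_word p w)"
proof (induction w)
  case Nil
  show ?case by (simp add: shuffle_left Lop_nil Rop_nil)
next
  case (Cons i w)
  show ?case by (simp add: shuffle_left Cons LR_comm)
qed

lemma Lop_lin: "finite A \<Longrightarrow> Lop p i (\<lambda>v. \<Sum>u\<in>A. c u * G u v) = (\<lambda>v. \<Sum>u\<in>A. c u * Lop p i (G u) v)"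
proof (rule ext)
  fix v :: "nat list" assume A: "finite A"
  have "Lop p i (\<lambda>v. \<Sum>u\<in>A. c u * G u v) v = (\<Sum>k<length v. \<Sum>u\<in>A.
     if v!k = i then c u * (inverse (\<Prod>a<k. p (v!a) i) * G u (del k v)) else 0)"
    unfolding Lop_def by (rule sum.cong) (auto simp: sum_distrib_left mult_ac)
  also have "\<dots> = (\<Sum>u\<in>A. \<Sum>k<length v.
     if v!k = i then c u * (inverse (\<Prod>a<k. p (v!a) i) * G u (del k v)) else 0)"
    by (rule sum.swap)
  also have "\<dots> = (\<Sum>u\<in>A. c u * Lop p i (G u) v)"
    unfolding Lop_def by (rule sum.cong) (auto simp: sum_distrib_left intro!: sum.cong)
  finally show "Lop p i (\<lambda>v. \<Sum>u\<in>A. c u * G u v) v = (\<Sum>u\<in>A. c u * Lop p i (G u) v)" .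
qed

lemma Rop_lin: "finite A \<Longrightarrow> Rop p i (\<lambda>v. \<Sum>u\<in>A. c u * G u v) = (\<lambda>v. \<Sum>u\<in>A. c u * Rop p i (G u) v)"
proof (rule ext)
  fix v :: "nat list" assume A: "finite A"
  have "Rop p i (\<lambda>v. \<Sum>u\<in>A. c u * G u v) v = (\<Sum>k<length v. \<Sum>u\<in>A.
     if v!k = i then c u * (inverse (\<Prod>a\<in>{Suc k..<length v}. p i (v!a)) * G u (del k v)) else 0)"
    unfolding Rop_def by (rule sum.cong) (auto simp: sum_distrib_left sum_distrib_right mult_ac)
  also have "\<dots> = (\<Sum>u\<in>A. \<Sum>k<length v.
     if v!k = i then c u * (inverse (\<Prod>a\<in>{Suc k..<length v}. p i (v!a)) * G u (del k v)) else 0)"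
    by (rule sum.swap)
  also have "\<dots> = (\<Sum>u\<in>A. c u * Rop p i (G u) v)"
    unfolding Rop_def by (rule sum.cong) (auto simp: sum_distrib_left intro!: sum.cong)
  finally show "Rop p i (\<lambda>v. \<Sum>u\<in>A. c u * G u v) v = (\<Sum>u\<in>A. c u * Rop p i (G u) v)" .
qed

lemma Omega_alt: "finite A \<Longrightarrow> {w. f w \<noteq> 0} \<subseteq> A \<Longrightarrow>
   Omega p f = (\<lambda>v. \<Sum>w\<in>A. f w * Omega_word p w v)"
  unfolding Omega_def
  by (rule ext, rule sum.mono_neutral_left) auto

definition fsupp :: "'k::field lin \<Rightarrow> bool" where "fsupp f = finite {w. f w \<noteq> 0}"

lemma fmult_gen_right: "fmult f (gen j) = (\<lambda>w. if w \<noteq> [] \<and> last w = j then f (butlast w) else 0)"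
proof
  fix w :: "nat list"
  have key: "drop i w = [j] \<longleftrightarrow> (w \<noteq> [] \<and> last w = j \<and> i = length w - 1)" if "i \<le> length w" for i
  proof
    assume d: "drop i w = [j]"
    then have "length (drop i w) = 1" by simp
    then have "length w - i = 1" by simp
    moreover have "w \<noteq> []" using d by auto
    moreover have "i < length w" using d by (cases "i < length w") auto
    moreover have "last (drop i w) = last w" using calculation by (intro last_drop)
    ultimately show "w \<noteq> [] \<and> last w = j \<and> i = length w - 1" using d by auto
  next
    assume "w \<noteq> [] \<and> last w = j \<and> i = length w - 1"
    then show "drop i w = [j]" by (cases w rule: rev_cases) auto
  qed
  have "fmult f (gen j) w = (\<Sum>i\<in>{0..length w}. if i = length w - 1 then (if w \<noteq> [] \<and> last w = j then f (butlast w) else 0) else 0)"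
    unfolding fmult_def gen_def comono_def
    by (rule sum.cong) (auto simp: key butlast_conv_take)
  then show "fmult f (gen j) w = (if w \<noteq> [] \<and> last w = j then f (butlast w) else 0)"
    by simp
qed

lemma fmult_gen_left: "fmult (gen j) f = (\<lambda>w. if w \<noteq> [] \<and> hd w = j then f (tl w) else 0)"
proof
  fix w :: "nat list"
  have key: "take i w = [j] \<longleftrightarrow> (w \<noteq> [] \<and> hd w = j \<and> i = 1)" if "i \<le> length w" for i
    using that by (cases w; cases i) auto
  have "fmult (gen j) f w = (\<Sum>i\<in>{0..length w}. if i = 1 then (if w \<noteq> [] \<and> hd w = j then f (tl w) else 0) else 0)"
    unfolding fmult_def gen_def comono_def
    by (rule sum.cong) (auto simp: key drop_Suc)
  then show "fmult (gen j) f w = (if w \<noteq> [] \<and> hd w = j then f (tl w) else 0)"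
    by (cases w) (auto simp: Suc_le_eq)
qed


lemma PL1: "prod_list (map f xs) = (\<Prod>a<length xs. f (xs!a))"
  by (induction xs) (simp_all del: prod.lessThan_Suc add: prod.lessThan_Suc_shift)

lemma PL2: "prod_list (map f (drop l xs)) = (\<Prod>a\<in>{l..<length xs}. f (xs!a))"
proof (induction l arbitrary: xs)
  case 0 then show ?case by (simp add: PL1 atLeast0LessThan)
next
  case (Suc l)
  then show ?case
  proof (cases xs)
    case Nil then show ?thesis by simp
  next
    case (Cons x xs')
    have "(\<Prod>a\<in>{Suc l..<length (x#xs')}. f ((x#xs')!a)) = (\<Prod>a\<in>{l..<length xs'}. f (xs'!a))"
      by (simp only: length_Cons prod.shift_bounds_Suc_ivl nth_Cons_Suc)
    then show ?thesis using Suc.IH[of xs'] Cons by (metis drop_Suc_Cons)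
  qed
qed

lemma ins_char: "l < length v \<Longrightarrow> length v = Suc (length e) \<Longrightarrow>
   (v!l = j \<and> del l v = e) \<longleftrightarrow> v = take l e @ j # drop l e"
proof
  assume l: "l < length v" and len: "length v = Suc (length e)"
  assume "v!l = j \<and> del l v = e"
  then have vj: "v!l = j" and d: "del l v = e" by auto
  have "take l e = take l v" using l by (simp add: d[symmetric] del_def)
  moreover have "drop l e = drop (Suc l) v" using l by (simp add: d[symmetric] del_def)
  moreover have "v = take l v @ v!l # drop (Suc l) v" using l by (rule id_take_nth_drop)
  ultimately show "v = take l e @ j # drop l e" using vj by simp
next
  assume l: "l < length v" and len: "length v = Suc (length e)"
  assume v: "v = take l e @ j # drop l e"
  have le: "l \<le> length e" using l len by simp
  show "v!l = j \<and> del l v = e" using le unfolding v del_def by (simp add: nth_append)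
qed

lemma Lop_comono: "Lop p i (comono e) = (\<lambda>v. \<Sum>l\<le>length e. if v = take l e @ i # drop l e
    then inverse (prod_list (map (\<lambda>a. p a i) (take l e))) else 0)"
proof
  fix v :: "nat list"
  show "Lop p i (comono e) v = (\<Sum>l\<le>length e. if v = take l e @ i # drop l e
    then inverse (prod_list (map (\<lambda>a. p a i) (take l e))) else 0)"
  proof (cases "length v = Suc (length e)")
    case True
    show ?thesis unfolding Lop_def True lessThan_Suc_atMost
    proof (rule sum.cong)
      fix l assume "l \<in> {..length e}"
      then have l: "l < length v" "l \<le> length e" using True by auto
      show "(if v ! l = i then inverse (\<Prod>a<l. p (v ! a) i) * comono e (del l v) else 0) =
        (if v = take l e @ i # drop l e then inverse (prod_list (map (\<lambda>a. p a i) (take l e))) else 0)"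
      proof (cases "v = take l e @ i # drop l e")
        case True2: True
        then have "v!l = i \<and> del l v = e" using ins_char[OF l(1) True] by simp
        moreover have "(\<Prod>a<l. p (v ! a) i) = prod_list (map (\<lambda>a. p a i) (take l e))"
          unfolding PL1 using l(2) by (intro prod.cong) (auto simp: True2 nth_append min_def)
        ultimately show ?thesis using True2 by (simp add: comono_def)
      next
        case False
        then have "\<not> (v!l = i \<and> del l v = e)" using ins_char[OF l(1) True] by simp
        then show ?thesis using False by (auto simp: comono_def)
      qed
    qed simp
  next
    case False
    have "\<forall>l<length v. del l v \<noteq> e" using False by (auto simp: del_def)
    moreover have "\<forall>l\<le>length e. v \<noteq> take l e @ i # drop l e" using False by auto
    ultimately show ?thesis by (auto simp: Lop_def comono_def intro!: sum.neutral)
  qed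
qed

lemma Rop_comono: "Rop p j (comono e) = (\<lambda>v. \<Sum>l\<le>length e. if v = take l e @ j # drop l e
    then inverse (prod_list (map (p j) (drop l e))) else 0)"
proof
  fix v :: "nat list"
  show "Rop p j (comono e) v = (\<Sum>l\<le>length e. if v = take l e @ j # drop l e
    then inverse (prod_list (map (p j) (drop l e))) else 0)"
  proof (cases "length v = Suc (length e)")
    case True
    show ?thesis unfolding Rop_def True lessThan_Suc_atMost
    proof (rule sum.cong)
      fix l assume "l \<in> {..length e}"
      then have l: "l < length v" "l \<le> length e" using True by auto
      show "(if v ! l = j then inverse (\<Prod>a\<in>{Suc l..<Suc (length e)}. p j (v ! a)) * comono e (del l v) else 0) =
        (if v = take l e @ j # drop l e then inverse (prod_list (map (p j) (drop l e))) else 0)"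
      proof (cases "v = take l e @ j # drop l e")
        case True2: True
        then have "v!l = j \<and> del l v = e" using ins_char[OF l(1) True] by simp
        moreover have "(\<Prod>a\<in>{Suc l..<Suc (length e)}. p j (v ! a)) = prod_list (map (p j) (drop l e))"
          unfolding PL2 prod.shift_bounds_Suc_ivl using l(2)
          by (intro prod.cong) (auto simp: True2 nth_append min_def)
        ultimately show ?thesis using True2 by (simp add: comono_def)
      next
        case False
        then have "\<not> (v!l = j \<and> del l v = e)" using ins_char[OF l(1) True] by simp
        then show ?thesis using False by (auto simp: comono_def)
      qed
    qed simp
  next
    case False
    have "\<forall>l<length v. del l v \<noteq> e" using False by (auto simp: del_def)
    moreover have "\<forall>l\<le>length e. v \<noteq> take l e @ j # drop l e" using False by auto
    ultimately show ?thesis by (auto simp: Rop_def comono_def intro!: sum.neutral)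
  qed
qed


lemma fsupp_gen: "fsupp (gen j)"
proof -
  have "{w. gen j w \<noteq> (0::'k::field)} \<subseteq> {[j]}" by (auto simp: gen_def comono_def)
  then show ?thesis unfolding fsupp_def by (rule finite_subset) simp
qed

lemma fsupp_lsmult: "fsupp f \<Longrightarrow> fsupp (lsmult c f)"
  unfolding fsupp_def lsmult_def by (rule finite_subset[rotated]) auto

lemma fsupp_lminus: "fsupp f \<Longrightarrow> fsupp g \<Longrightarrow> fsupp (lminus f g)"
  unfolding fsupp_def lminus_def
  by (rule finite_subset[of _ "{w. f w \<noteq> 0} \<union> {w. g w \<noteq> 0}"]) auto

lemma supp_right: "{w. fmult f (gen j) w \<noteq> 0} \<subseteq> (\<lambda>u. u @ [j]) ` {w. f w \<noteq> 0}"
proof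
  fix w assume "w \<in> {w. fmult f (gen j) w \<noteq> 0}"
  then have "w \<noteq> []" "last w = j" "f (butlast w) \<noteq> 0" by (auto simp: fmult_gen_right split: if_splits)
  then show "w \<in> (\<lambda>u. u @ [j]) ` {w. f w \<noteq> 0}"
    by (intro image_eqI[where x="butlast w"]) auto
qed

lemma supp_left: "{w. fmult (gen j) f w \<noteq> 0} \<subseteq> (\<lambda>u. j # u) ` {w. f w \<noteq> 0}"
proof
  fix w assume "w \<in> {w. fmult (gen j) f w \<noteq> 0}"
  then have "w \<noteq> []" "hd w = j" "f (tl w) \<noteq> 0" by (auto simp: fmult_gen_left split: if_splits)
  then show "w \<in> (\<lambda>u. j # u) ` {w. f w \<noteq> 0}"
    by (intro image_eqI[where x="tl w"]) auto
qed

lemma fsupp_right: "fsupp f \<Longrightarrow> fsupp (fmult f (gen j))"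
  unfolding fsupp_def by (rule finite_subset[OF supp_right]) simp

lemma fsupp_left: "fsupp f \<Longrightarrow> fsupp (fmult (gen j) f)"
  unfolding fsupp_def by (rule finite_subset[OF supp_left]) simp

lemma Omega_right: "fsupp f \<Longrightarrow> Omega p (fmult f (gen j)) = Rop p j (Omega p f)"
proof -
  assume fs: "fsupp f"
  define B where "B = {w. f w \<noteq> 0}"
  have fB: "finite B" using fs by (simp add: fsupp_def B_def)
  have "Omega p (fmult f (gen j)) = (\<lambda>v. \<Sum>w\<in>(\<lambda>u. u @ [j]) ` B. fmult f (gen j) w * Omega_word p w v)"
    using fB supp_right[of f j] by (intro Omega_alt) (auto simp: B_def)
  also have "\<dots> = (\<lambda>v. \<Sum>u\<in>B. f u * Omega_word p (u @ [j]) v)"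
    by (rule ext, subst sum.reindex) (auto simp: inj_on_def fmult_gen_right)
  also have "\<dots> = (\<lambda>v. \<Sum>u\<in>B. f u * Rop p j (Omega_word p u) v)"
    by (simp add: Omega_word_snoc)
  also have "\<dots> = Rop p j (\<lambda>v. \<Sum>u\<in>B. f u * Omega_word p u v)"
    by (rule Rop_lin[OF fB, symmetric])
  also have "(\<lambda>v. \<Sum>u\<in>B. f u * Omega_word p u v) = Omega p f"
    using fB by (intro Omega_alt[symmetric]) (auto simp: B_def)
  finally show ?thesis .
qed

lemma Omega_left: "fsupp f \<Longrightarrow> Omega p (fmult (gen j) f) = Lop p j (Omega p f)"
proof -
  assume fs: "fsupp f"
  define B where "B = {w. f w \<noteq> 0}"
  have fB: "finite B" using fs by (simp add: fsupp_def B_def)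
  have "Omega p (fmult (gen j) f) = (\<lambda>v. \<Sum>w\<in>(\<lambda>u. j # u) ` B. fmult (gen j) f w * Omega_word p w v)"
    using fB supp_left[of j f] by (intro Omega_alt) (auto simp: B_def)
  also have "\<dots> = (\<lambda>v. \<Sum>u\<in>B. f u * Omega_word p (j # u) v)"
    by (rule ext, subst sum.reindex) (auto simp: inj_on_def fmult_gen_left)
  also have "\<dots> = (\<lambda>v. \<Sum>u\<in>B. f u * Lop p j (Omega_word p u) v)"
    by (simp add: shuffle_left)
  also have "\<dots> = Lop p j (\<lambda>v. \<Sum>u\<in>B. f u * Omega_word p u v)"
    by (rule Lop_lin[OF fB, symmetric])
  also have "(\<lambda>v. \<Sum>u\<in>B. f u * Omega_word p u v) = Omega p f"
    using fB by (intro Omega_alt[symmetric]) (auto simp: B_def)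
  finally show ?thesis .
qed

lemma Omega_lsmult: "fsupp f \<Longrightarrow> Omega p (lsmult c f) = lsmult c (Omega p f)"
proof -
  assume fs: "fsupp f"
  define B where "B = {w. f w \<noteq> 0}"
  have fB: "finite B" using fs by (simp add: fsupp_def B_def)
  have "Omega p (lsmult c f) = (\<lambda>v. \<Sum>w\<in>B. lsmult c f w * Omega_word p w v)"
    using fB by (intro Omega_alt) (auto simp: B_def lsmult_def)
  moreover have "Omega p f = (\<lambda>v. \<Sum>w\<in>B. f w * Omega_word p w v)"
    using fB by (intro Omega_alt) (auto simp: B_def)
  ultimately show ?thesis by (simp add: lsmult_def sum_distrib_left mult_ac)
qed

lemma Omega_lminus: "fsupp f \<Longrightarrow> fsupp g \<Longrightarrow> Omega p (lminus f g) = lminus (Omega p f) (Omega p g)"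
proof -
  assume fs: "fsupp f" and gs: "fsupp g"
  define B where "B = {w. f w \<noteq> 0} \<union> {w. g w \<noteq> 0}"
  have fB: "finite B" using fs gs by (simp add: fsupp_def B_def)
  have "Omega p (lminus f g) = (\<lambda>v. \<Sum>w\<in>B. lminus f g w * Omega_word p w v)"
    using fB by (intro Omega_alt) (auto simp: B_def lminus_def)
  moreover have "Omega p f = (\<lambda>v. \<Sum>w\<in>B. f w * Omega_word p w v)"
    using fB by (intro Omega_alt) (auto simp: B_def)
  moreover have "Omega p g = (\<lambda>v. \<Sum>w\<in>B. g w * Omega_word p w v)"
    using fB by (intro Omega_alt) (auto simp: B_def)
  ultimately show ?thesis by (simp add: lminus_def sum_subtractf left_diff_distrib)
qed

lemma Lop_lsmult: "Lop p i (lsmult c F) = lsmult c (Lop p i F)"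
  unfolding Lop_def lsmult_def by (rule ext) (simp add: sum_distrib_left, rule sum.cong, simp_all add: mult_ac)

lemma Rop_lsmult: "Rop p i (lsmult c F) = lsmult c (Rop p i F)"
  unfolding Rop_def lsmult_def by (rule ext) (simp add: sum_distrib_left, rule sum.cong, simp_all add: mult_ac)

lemma fsupp_br_left: "fsupp (br_left p k)"
  by (induction k) (simp_all add: fsupp_gen skew_br_def fsupp_lminus fsupp_lsmult fsupp_right fsupp_left)

lemma fsupp_br_right: "fsupp (br_right p k)"
  by (induction k) (simp_all add: fsupp_gen skew_br_def fsupp_lminus fsupp_lsmult fsupp_right fsupp_left)


lemma rep_ins: "l \<le> k \<Longrightarrow> replicate l x @ x # replicate (k - l) x = replicate (Suc k) x"
proof -
  assume "l \<le> k"
  then have "Suc k = l + Suc (k - l)" by simp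
  then show ?thesis by (simp only: replicate_add) simp
qed

lemma tr1: "l \<le> k \<Longrightarrow> take l (replicate k x @ ys) = replicate l x"
  by (simp add: take_append)

lemma dr1: "l \<le> k \<Longrightarrow> drop l (replicate k x @ ys) = replicate (k - l) x @ ys"
  by (simp add: drop_append)

lemma RL: "Rop p 2 (comono (replicate k 2 @ [1])) = (\<lambda>v.
   (if v = replicate (Suc k) 2 @ [1] then inverse (p 2 1) * (\<Sum>l\<le>k. inverse (p 2 2 ^ (k - l))) else 0) +
   (if v = replicate k 2 @ [1, 2] then 1 else 0))"
proof
  fix v :: "nat list"
  let ?e = "replicate k 2 @ [1::nat]"
  have "Rop p 2 (comono ?e) v = (\<Sum>l\<le>k. if v = take l ?e @ 2 # drop l ?e
    then inverse (prod_list (map (p 2) (drop l ?e))) else 0) +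
    (if v = take (Suc k) ?e @ 2 # drop (Suc k) ?e then inverse (prod_list (map (p 2) (drop (Suc k) ?e))) else 0)"
    unfolding Rop_comono by (simp only: length_append length_replicate list.size add_0 Nat.add_0_right add_Suc_right sum.atMost_Suc)
  also have "(\<Sum>l\<le>k. if v = take l ?e @ 2 # drop l ?e
    then inverse (prod_list (map (p 2) (drop l ?e))) else 0) =
    (\<Sum>l\<le>k. if v = replicate (Suc k) 2 @ [1] then inverse (p 2 1) * inverse (p 2 2 ^ (k - l)) else 0)"
  proof (rule sum.cong)
    fix l assume "l \<in> {..k}"
    then have l: "l \<le> k" by simp
    show "(if v = take l ?e @ 2 # drop l ?e then inverse (prod_list (map (p 2) (drop l ?e))) else 0) =
      (if v = replicate (Suc k) 2 @ [1] then inverse (p 2 1) * inverse (p 2 2 ^ (k - l)) else 0)"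
    proof -
      have e1: "take l ?e @ 2 # drop l ?e = replicate (Suc k) 2 @ [1]"
        unfolding tr1[OF l] dr1[OF l] by (simp add: rep_ins[OF l, symmetric] del: replicate_Suc)
      have e2: "prod_list (map (p 2) (drop l ?e)) = p 2 2 ^ (k - l) * p 2 1"
        unfolding dr1[OF l] by simp
      show ?thesis unfolding e1 e2 by (simp add: inverse_mult_distrib mult_ac)
    qed
  qed simp
  finally show "Rop p 2 (comono (replicate k 2 @ [1])) v =
   (if v = replicate (Suc k) 2 @ [1] then inverse (p 2 1) * (\<Sum>l\<le>k. inverse (p 2 2 ^ (k - l))) else 0) +
   (if v = replicate k 2 @ [1, 2] then 1 else 0)"
    by (simp add: sum_distrib_left)
qed


lemma LL: "Lop p 2 (comono (replicate k 2 @ [1])) = (\<lambda>v.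
   (if v = replicate (Suc k) 2 @ [1] then (\<Sum>l\<le>k. inverse (p 2 2 ^ l)) else 0) +
   (if v = replicate k 2 @ [1, 2] then inverse (p 2 2 ^ k * p 1 2) else 0))"
proof
  fix v :: "nat list"
  let ?e = "replicate k 2 @ [1::nat]"
  have "Lop p 2 (comono ?e) v = (\<Sum>l\<le>k. if v = take l ?e @ 2 # drop l ?e
    then inverse (prod_list (map (\<lambda>a. p a 2) (take l ?e))) else 0) +
    (if v = take (Suc k) ?e @ 2 # drop (Suc k) ?e then inverse (prod_list (map (\<lambda>a. p a 2) (take (Suc k) ?e))) else 0)"
    unfolding Lop_comono by (simp only: length_append length_replicate list.size add_0 Nat.add_0_right add_Suc_right sum.atMost_Suc)
  also have "(\<Sum>l\<le>k. if v = take l ?e @ 2 # drop l ?e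
    then inverse (prod_list (map (\<lambda>a. p a 2) (take l ?e))) else 0) =
    (\<Sum>l\<le>k. if v = replicate (Suc k) 2 @ [1] then inverse (p 2 2 ^ l) else 0)"
  proof (rule sum.cong)
    fix l assume "l \<in> {..k}"
    then have l: "l \<le> k" by simp
    show "(if v = take l ?e @ 2 # drop l ?e then inverse (prod_list (map (\<lambda>a. p a 2) (take l ?e))) else 0) =
      (if v = replicate (Suc k) 2 @ [1] then inverse (p 2 2 ^ l) else 0)"
    proof -
      have e1: "take l ?e @ 2 # drop l ?e = replicate (Suc k) 2 @ [1]"
        unfolding tr1[OF l] dr1[OF l] by (simp add: rep_ins[OF l, symmetric] del: replicate_Suc)
      have e2: "prod_list (map (\<lambda>a. p a 2) (take l ?e)) = p 2 2 ^ l"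
        unfolding tr1[OF l] by simp
      show ?thesis unfolding e1 e2 by simp
    qed
  qed simp
  finally show "Lop p 2 (comono (replicate k 2 @ [1])) v =
   (if v = replicate (Suc k) 2 @ [1] then (\<Sum>l\<le>k. inverse (p 2 2 ^ l)) else 0) +
   (if v = replicate k 2 @ [1, 2] then inverse (p 2 2 ^ k * p 1 2) else 0)"
    by (simp add: mult_ac)
qed

lemma RR: "Rop p 2 (comono (1 # replicate k 2)) = (\<lambda>v.
   (if v = 2 # 1 # replicate k 2 then inverse (p 2 1 * p 2 2 ^ k) else 0) +
   (if v = 1 # replicate (Suc k) 2 then (\<Sum>l\<le>k. inverse (p 2 2 ^ (k - l))) else 0))"
proof
  fix v :: "nat list"
  let ?e = "1 # replicate k (2::nat)"
  have "Rop p 2 (comono ?e) v = 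
    (if v = take 0 ?e @ 2 # drop 0 ?e then inverse (prod_list (map (p 2) (drop 0 ?e))) else 0) +
    (\<Sum>l\<le>k. if v = take (Suc l) ?e @ 2 # drop (Suc l) ?e
    then inverse (prod_list (map (p 2) (drop (Suc l) ?e))) else 0)"
    unfolding Rop_comono by (simp only: length_replicate list.size(4) Nat.add_Suc_right Nat.add_0_right sum.atMost_Suc_shift)
  also have "(\<Sum>l\<le>k. if v = take (Suc l) ?e @ 2 # drop (Suc l) ?e
    then inverse (prod_list (map (p 2) (drop (Suc l) ?e))) else 0) =
    (\<Sum>l\<le>k. if v = 1 # replicate (Suc k) 2 then inverse (p 2 2 ^ (k - l)) else 0)"
  proof (rule sum.cong)
    fix l assume "l \<in> {..k}"
    then have l: "l \<le> k" by simp
    have e1: "take (Suc l) ?e @ 2 # drop (Suc l) ?e = 1 # replicate (Suc k) 2"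
      using l by (simp add: rep_ins[OF l, symmetric] del: replicate_Suc)
    have e2: "prod_list (map (p 2) (drop (Suc l) ?e)) = p 2 2 ^ (k - l)"
      by simp
    show "(if v = take (Suc l) ?e @ 2 # drop (Suc l) ?e then inverse (prod_list (map (p 2) (drop (Suc l) ?e))) else 0) =
      (if v = 1 # replicate (Suc k) 2 then inverse (p 2 2 ^ (k - l)) else 0)"
      unfolding e1 e2 by simp
  qed simp
  finally show "Rop p 2 (comono ?e) v =
   (if v = 2 # 1 # replicate k 2 then inverse (p 2 1 * p 2 2 ^ k) else 0) +
   (if v = 1 # replicate (Suc k) 2 then (\<Sum>l\<le>k. inverse (p 2 2 ^ (k - l))) else 0)"
    by simp
qed

lemma LR: "Lop p 2 (comono (1 # replicate k 2)) = (\<lambda>v.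
   (if v = 2 # 1 # replicate k 2 then 1 else 0) +
   (if v = 1 # replicate (Suc k) 2 then inverse (p 1 2) * (\<Sum>l\<le>k. inverse (p 2 2 ^ l)) else 0))"
proof
  fix v :: "nat list"
  let ?e = "1 # replicate k (2::nat)"
  have "Lop p 2 (comono ?e) v = 
    (if v = take 0 ?e @ 2 # drop 0 ?e then inverse (prod_list (map (\<lambda>a. p a 2) (take 0 ?e))) else 0) +
    (\<Sum>l\<le>k. if v = take (Suc l) ?e @ 2 # drop (Suc l) ?e
    then inverse (prod_list (map (\<lambda>a. p a 2) (take (Suc l) ?e))) else 0)"
    unfolding Lop_comono by (simp only: length_replicate list.size(4) Nat.add_Suc_right Nat.add_0_right sum.atMost_Suc_shift)
  also have "(\<Sum>l\<le>k. if v = take (Suc l) ?e @ 2 # drop (Suc l) ?e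
    then inverse (prod_list (map (\<lambda>a. p a 2) (take (Suc l) ?e))) else 0) =
    (\<Sum>l\<le>k. if v = 1 # replicate (Suc k) 2 then inverse (p 1 2) * inverse (p 2 2 ^ l) else 0)"
  proof (rule sum.cong)
    fix l assume "l \<in> {..k}"
    then have l: "l \<le> k" by simp
    have e1: "take (Suc l) ?e @ 2 # drop (Suc l) ?e = 1 # replicate (Suc k) 2"
      using l by (simp add: rep_ins[OF l, symmetric] del: replicate_Suc)
    have e2: "prod_list (map (\<lambda>a. p a 2) (take (Suc l) ?e)) = p 1 2 * p 2 2 ^ l"
      using l by (simp add: min_def)
    show "(if v = take (Suc l) ?e @ 2 # drop (Suc l) ?e then inverse (prod_list (map (\<lambda>a. p a 2) (take (Suc l) ?e))) else 0) =
      (if v = 1 # replicate (Suc k) 2 then inverse (p 1 2) * inverse (p 2 2 ^ l) else 0)"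
      unfolding e1 e2 by (simp add: inverse_mult_distrib)
  qed simp
  finally show "Lop p 2 (comono ?e) v =
   (if v = 2 # 1 # replicate k 2 then 1 else 0) +
   (if v = 1 # replicate (Suc k) 2 then inverse (p 1 2) * (\<Sum>l\<le>k. inverse (p 2 2 ^ l)) else 0)"
    by (simp add: sum_distrib_left)
qed


lemma sumS: "(q::'k::field) \<noteq> 0 \<Longrightarrow> (\<Sum>l\<le>k. inverse (q ^ l)) = inverse (q ^ k) * qint q (Suc k)"
proof (induction k)
  case 0 then show ?case by (simp add: qint_def)
next
  case (Suc k)
  have qi: "qint q (Suc (Suc k)) = 1 + q * qint q (Suc k)"
    unfolding qint_def by (simp only: sum.lessThan_Suc_shift[of _ "Suc k"]) (simp add: sum_distrib_left del: sum.lessThan_Suc)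
  show ?case using Suc by (simp add: qi field_simps)
qed

lemma sumS': "(q::'k::field) \<noteq> 0 \<Longrightarrow> (\<Sum>l\<le>k. inverse (q ^ (k - l))) = inverse (q ^ k) * qint q (Suc k)"
proof -
  assume q: "q \<noteq> 0"
  have "(\<Sum>l\<le>k. inverse (q ^ (k - l))) = (\<Sum>l\<le>k. inverse (q ^ k) * q ^ l)"
  proof (rule sum.cong)
    fix l assume "l \<in> {..k}"
    then have "q ^ k = q ^ (k - l) * q ^ l" by (simp add: power_add[symmetric])
    then show "inverse (q ^ (k - l)) = inverse (q ^ k) * q ^ l" using q by (simp add: field_simps)
  qed simp
  also have "\<dots> = inverse (q ^ k) * qint q (Suc k)"
    by (simp add: qint_def sum_distrib_left lessThan_Suc_atMost)
  finally show ?thesis .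
qed

definition coef :: "(nat \<Rightarrow> nat \<Rightarrow> 'k::field) \<Rightarrow> nat \<Rightarrow> 'k" where
  "coef p k = qfact (p 2 2) k * (\<Prod>s<k. 1 - p 1 2 * p 2 1 * p 2 2 ^ s) * inverse (p 2 2 ^ (k * (k - 1) div 2))"

lemma coef_Suc: "p 2 2 \<noteq> 0 \<Longrightarrow>
  coef p (Suc k) = coef p k * (1 - p 1 2 * p 2 1 * p 2 2 ^ k) * (inverse (p 2 2 ^ k) * qint (p 2 2) (Suc k))"
proof -
  assume q: "p 2 2 \<noteq> 0"
  have e: "Suc k * (Suc k - 1) div 2 = k * (k - 1) div 2 + k"
  proof -
    have "Suc k * (Suc k - 1) = k * (k - 1) + 2 * k" by (cases k) (simp_all add: algebra_simps)
    then show ?thesis by simp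
  qed
  have f: "qfact (p 2 2) (Suc k) = qfact (p 2 2) k * qint (p 2 2) (Suc k)"
    by (simp add: qfact_def)
  show ?thesis unfolding coef_def e f power_add using q by (simp add: inverse_mult_distrib mult_ac)
qed

lemma neqXY: "replicate (Suc k) (2::nat) @ [1] \<noteq> replicate k 2 @ [1, 2]"
proof
  assume "replicate (Suc k) (2::nat) @ [1] = replicate k 2 @ [1, 2]"
  then have "last (replicate (Suc k) (2::nat) @ [1]) = last (replicate k 2 @ [1, 2])" by simp
  then show False by simp
qed

lemma Om_left:
  assumes p12: "p 1 2 \<noteq> 0" and p21: "p 2 1 \<noteq> 0" and q: "p 2 2 \<noteq> 0"
  shows "Omega p (br_left p k) = lsmult (coef p k * inverse (p 2 1 ^ k)) (comono (replicate k 2 @ [1]))"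
proof (induction k)
  case 0
  have "Omega p (gen 1) = (\<lambda>v. \<Sum>w\<in>{[1]}. gen 1 w * Omega_word p w v)"
    by (rule Omega_alt) (auto simp: gen_def comono_def)
  also have "\<dots> = Omega_word p [1]" by (simp add: gen_def comono_def)
  also have "\<dots> = comono [1]" by (simp add: shuffle_left Lop_nil)
  finally show ?case by (simp add: coef_def qfact_def lsmult_def)
next
  case (Suc k)
  let ?b = "br_left p k"
  let ?a = "coef p k * inverse (p 2 1 ^ k)"
  have fb: "fsupp ?b" by (rule fsupp_br_left)
  have "Omega p (br_left p (Suc k)) = lminus (Rop p 2 (lsmult ?a (comono (replicate k 2 @ [1]))))
     (lsmult (p 1 2 * p 2 2 ^ k) (Lop p 2 (lsmult ?a (comono (replicate k 2 @ [1])))))"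
    using fb by (simp add: skew_br_def Omega_lminus Omega_lsmult fsupp_right fsupp_left fsupp_lsmult
        Omega_right Omega_left Suc.IH pw_def)
  also have "\<dots> = lsmult (coef p (Suc k) * inverse (p 2 1 ^ Suc k)) (comono (replicate (Suc k) 2 @ [1]))"
  proof
    fix v :: "nat list"
    show "lminus (Rop p 2 (lsmult ?a (comono (replicate k 2 @ [1]))))
     (lsmult (p 1 2 * p 2 2 ^ k) (Lop p 2 (lsmult ?a (comono (replicate k 2 @ [1]))))) v =
      lsmult (coef p (Suc k) * inverse (p 2 1 ^ Suc k)) (comono (replicate (Suc k) 2 @ [1])) v"
      unfolding Rop_lsmult Lop_lsmult RL LL
      unfolding lminus_def lsmult_def comono_def coef_Suc[of p k, OF q]
        sumS[OF q] sumS'[OF q]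
      using neqXY[of k] p12 p21 q
      by (auto simp: field_simps simp del: replicate_Suc)
  qed
  finally show ?case .
qed


lemma Om_right:
  assumes p12: "p 1 2 \<noteq> 0" and p21: "p 2 1 \<noteq> 0" and q: "p 2 2 \<noteq> 0"
  shows "Omega p (br_right p k) = lsmult (coef p k * inverse (p 1 2 ^ k)) (comono (1 # replicate k 2))"
proof (induction k)
  case 0
  have "Omega p (gen 1) = (\<lambda>v. \<Sum>w\<in>{[1]}. gen 1 w * Omega_word p w v)"
    by (rule Omega_alt) (auto simp: gen_def comono_def)
  also have "\<dots> = Omega_word p [1]" by (simp add: gen_def comono_def)
  also have "\<dots> = comono [1]" by (simp add: shuffle_left Lop_nil)
  finally show ?case by (simp add: coef_def qfact_def lsmult_def)
next
  case (Suc k)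
  let ?b = "br_right p k"
  let ?a = "coef p k * inverse (p 1 2 ^ k)"
  have fb: "fsupp ?b" by (rule fsupp_br_right)
  have "Omega p (br_right p (Suc k)) = lminus (Lop p 2 (lsmult ?a (comono (1 # replicate k 2))))
     (lsmult (p 2 2 ^ k * p 2 1) (Rop p 2 (lsmult ?a (comono (1 # replicate k 2)))))"
    using fb by (simp add: skew_br_def Omega_lminus Omega_lsmult fsupp_right fsupp_left fsupp_lsmult
        Omega_right Omega_left Suc.IH pw_def)
  also have "\<dots> = lsmult (coef p (Suc k) * inverse (p 1 2 ^ Suc k)) (comono (1 # replicate (Suc k) 2))"
  proof
    fix v :: "nat list"
    show "lminus (Lop p 2 (lsmult ?a (comono (1 # replicate k 2))))
     (lsmult (p 2 2 ^ k * p 2 1) (Rop p 2 (lsmult ?a (comono (1 # replicate k 2))))) v =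
      lsmult (coef p (Suc k) * inverse (p 1 2 ^ Suc k)) (comono (1 # replicate (Suc k) 2)) v"
      unfolding Rop_lsmult Lop_lsmult RR LR
      unfolding lminus_def lsmult_def comono_def coef_Suc[of p k, OF q]
        sumS[OF q] sumS'[OF q]
      using p12 p21 q
      by (auto simp: field_simps simp del: replicate_Suc)
  qed
  finally show ?case .
qed

theorem lemma3p2:
  fixes p :: "nat \<Rightarrow> nat \<Rightarrow> 'k::field" and n m :: nat
  assumes "n \<ge> 2"
    and "\<forall>i\<in>{1..n}. \<forall>j\<in>{1..n}. p i j \<noteq> 0"
  defines "q \<equiv> p 2 2"
  defines "c \<equiv> inverse (qfact q m * (\<Prod>s<m. 1 - p 1 2 * p 2 1 * q ^ s))"
  shows "((\<forall>k\<in>{1..m}. qint q k \<noteq> 0 \<and> p 1 2 * p 2 1 \<noteq> inverse (q ^ (k - 1))) \<longrightarrow>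
           Omega p (lsmult c (br_left p m)) =
             lsmult (inverse (p 2 1 ^ m) * inverse (q ^ (m * (m - 1) div 2)))
               (comono (replicate m 2 @ [1])) \<and>
           Omega p (lsmult c (br_right p m)) =
             lsmult (inverse (p 1 2 ^ m) * inverse (q ^ (m * (m - 1) div 2)))
               (comono (1 # replicate m 2)))
       \<and> (\<not> (\<forall>k\<in>{1..m}. qint q k \<noteq> 0 \<and> p 1 2 * p 2 1 \<noteq> inverse (q ^ (k - 1))) \<longrightarrow>
           Omega p (br_left p m) = (\<lambda>w. 0) \<and> Omega p (br_right p m) = (\<lambda>w. 0))"
proof -
  have p12: "p 1 2 \<noteq> 0" and p21: "p 2 1 \<noteq> 0" and q0: "p 2 2 \<noteq> 0"
    using assms(1,2) by auto
  define D where "D = qfact q m * (\<Prod>s<m. 1 - p 1 2 * p 2 1 * q ^ s)"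
  have coefD: "coef p m = D * inverse (q ^ (m * (m - 1) div 2))"
    by (simp add: coef_def D_def q_def)
  have L: "Omega p (br_left p m) = lsmult (D * inverse (q ^ (m * (m - 1) div 2)) * inverse (p 2 1 ^ m)) (comono (replicate m 2 @ [1]))"
    using Om_left[OF p12 p21 q0, of m] coefD by simp
  have R: "Omega p (br_right p m) = lsmult (D * inverse (q ^ (m * (m - 1) div 2)) * inverse (p 1 2 ^ m)) (comono (1 # replicate m 2))"
    using Om_right[OF p12 p21 q0, of m] coefD by simp
  have good: "D \<noteq> 0" if G: "\<forall>k\<in>{1..m}. qint q k \<noteq> 0 \<and> p 1 2 * p 2 1 \<noteq> inverse (q ^ (k - 1))"
  proof -
    have "qfact q m \<noteq> 0" unfolding qfact_def using G by (simp add: prod_zero_iff)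
    moreover have "(\<Prod>s<m. 1 - p 1 2 * p 2 1 * q ^ s) \<noteq> 0"
    proof -
      have "1 - p 1 2 * p 2 1 * q ^ s \<noteq> 0" if s: "s < m" for s
      proof
        assume "1 - p 1 2 * p 2 1 * q ^ s = 0"
        then have "p 1 2 * p 2 1 * q ^ s = 1" by simp
        then have "p 1 2 * p 2 1 = inverse (q ^ s)" using q0 q_def by (simp add: field_simps)
        moreover have "Suc s \<in> {1..m}" using s by simp
        ultimately show False using G by force
      qed
      then show ?thesis by (simp add: prod_zero_iff)
    qed
    ultimately show ?thesis by (simp add: D_def)
  qed
  have bad: "D = 0" if B: "\<not> (\<forall>k\<in>{1..m}. qint q k \<noteq> 0 \<and> p 1 2 * p 2 1 \<noteq> inverse (q ^ (k - 1)))"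
  proof -
    obtain k where k: "k \<in> {1..m}" "qint q k = 0 \<or> p 1 2 * p 2 1 = inverse (q ^ (k - 1))" using B by auto
    show ?thesis
    proof (cases "qint q k = 0")
      case True
      then have "qfact q m = 0" unfolding qfact_def using k(1) by (auto simp: prod_zero_iff)
      then show ?thesis by (simp add: D_def)
    next
      case False
      then have "p 1 2 * p 2 1 = inverse (q ^ (k - 1))" using k by auto
      then have "1 - p 1 2 * p 2 1 * q ^ (k - 1) = 0" using q0 q_def by simp
      moreover have "k - 1 < m" using k(1) by auto
      ultimately have "(\<Prod>s<m. 1 - p 1 2 * p 2 1 * q ^ s) = 0" by (auto simp: prod_zero_iff)
      then show ?thesis by (simp add: D_def)
    qed
  qed
  have cD: "c = inverse D" by (simp add: c_def D_def)
  show ?thesis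
  proof (intro conjI impI)
    assume G: "\<forall>k\<in>{1..m}. qint q k \<noteq> 0 \<and> p 1 2 * p 2 1 \<noteq> inverse (q ^ (k - 1))"
    have D: "D \<noteq> 0" using good[OF G] .
    show "Omega p (lsmult c (br_left p m)) = lsmult (inverse (p 2 1 ^ m) * inverse (q ^ (m * (m - 1) div 2)))
               (comono (replicate m 2 @ [1]))"
      unfolding Omega_lsmult[OF fsupp_br_left] L cD using D by (auto simp: lsmult_def field_simps)
    show "Omega p (lsmult c (br_right p m)) = lsmult (inverse (p 1 2 ^ m) * inverse (q ^ (m * (m - 1) div 2)))
               (comono (1 # replicate m 2))"
      unfolding Omega_lsmult[OF fsupp_br_right] R cD using D by (auto simp: lsmult_def field_simps)
  next
    assume B: "\<not> (\<forall>k\<in>{1..m}. qint q k \<noteq> 0 \<and> p 1 2 * p 2 1 \<noteq> inverse (q ^ (k - 1)))"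
    have D: "D = 0" using bad[OF B] .
    show "Omega p (br_left p m) = (\<lambda>w. 0)" unfolding L D by (simp add: lsmult_def)
    show "Omega p (br_right p m) = (\<lambda>w. 0)" unfolding R D by (simp add: lsmult_def)
  qed
qed

end
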